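(* Let $\mathcal{D}$ be $(\alpha,\beta)$-PDF-bounded with mean $\mu\in(0,1)$, let $C\ge1$ and $\varepsilon\in(0,1)$ be constants, let the weights satisfy $w_{\max}/w_{\min}\le C$, and let $(1+\varepsilon)\frac{n}{1-\mu}\le m=O(n\log n)$. Set $\tau=1-\frac{8(C+1)\log m}{\alpha n}$, $\delta=\left(1+\frac{\varepsilon}{1+\varepsilon}\cdot\frac{1-\mu}{\mu}\right)\tau-1$, and $s_i=\left\lceil(1+\delta)\frac{w_i}{W}\cdot\frac{\mu m}{\tau}\right\rceil$ for $i\in N$, $\mathbf{s}=(s_1,\ldots,s_n)$. Let $G_{\ge\tau}$ be the bipartite graph with parts $N$ and $M$ in which $(i,g)$ is an edge iff $u_i(g)\ge\tau$, where the utilities $u_i(g)$ are drawn independently from $\mathcal{D}$. Then, with high probability (as $n\to\infty$), $G_{\ge\tau}$ contains a left-saturating $\mathbf{s}$-matching (so the matching-based algorithm outputs one).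
   Context: Agents $N=[n]$ with positive weights $w_i$, $W=\sum_iw_i$; items $M=[m]$. $(\alpha,\beta)$-PDF-bounded: non-atomic with density in $[\alpha,\beta]$ on $[0,1]$; $\log$ is natural. For a bipartite graph $(L\cup R,E)$ with $|L|=n$ and positive integers $\mathbf{s}$ with $\sum s_i\le |R|$, an $\mathbf{s}$-matching is a set $F\subseteq E$ such that each $i\in L$ is incident to at most $s_i$ edges of $F$ and each vertex of $R$ to at most one; it is left-saturating if each $i\in L$ is incident to exactly $s_i$ edges of $F$. *)

theory Defs
  imports "HOL-Probability.Probability"
begin

definition s_matching :: "('a \<times> 'b) set \<Rightarrow> 'a set \<Rightarrow> 'b set \<Rightarrow> ('a \<Rightarrow> nat) \<Rightarrow> ('a \<times> 'b) set \<Rightarrow> bool" where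
  "s_matching E L R s F \<longleftrightarrow>
     F \<subseteq> E \<and> (\<forall>i\<in>L. card {g. (i, g) \<in> F} \<le> s i) \<and> (\<forall>g\<in>R. card {i. (i, g) \<in> F} \<le> 1)"

definition left_saturating_s_matching ::
  "('a \<times> 'b) set \<Rightarrow> 'a set \<Rightarrow> 'b set \<Rightarrow> ('a \<Rightarrow> nat) \<Rightarrow> ('a \<times> 'b) set \<Rightarrow> bool" where
  "left_saturating_s_matching E L R s F \<longleftrightarrow>
     s_matching E L R s F \<and> (\<forall>i\<in>L. card {g. (i, g) \<in> F} = s i)"

definition threshold_graph :: "nat \<Rightarrow> nat \<Rightarrow> (nat \<times> nat \<Rightarrow> real) \<Rightarrow> real \<Rightarrow> (nat \<times> nat) set" where
  "threshold_graph n m u t = {(i, g). i < n \<and> g < m \<and> u (i, g) \<ge> t}"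

definition tau_param :: "real \<Rightarrow> real \<Rightarrow> nat \<Rightarrow> nat \<Rightarrow> real" where
  "tau_param \<alpha> C n m = 1 - 8 * (C + 1) * ln (real m) / (\<alpha> * real n)"

definition delta_param :: "real \<Rightarrow> real \<Rightarrow> real \<Rightarrow> real" where
  "delta_param \<epsilon> \<mu> t = (1 + \<epsilon> / (1 + \<epsilon>) * ((1 - \<mu>) / \<mu>)) * t - 1"

definition s_param :: "real \<Rightarrow> real \<Rightarrow> real \<Rightarrow> real \<Rightarrow> nat \<Rightarrow> nat \<Rightarrow> (nat \<Rightarrow> real) \<Rightarrow> nat \<Rightarrow> nat" where
  "s_param \<alpha> C \<epsilon> \<mu> n m w i =
     (let t = tau_param \<alpha> C n m; d = delta_param \<epsilon> \<mu> t; W = (\<Sum>j<n. w j)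
      in nat \<lceil>(1 + d) * (w i / W) * (\<mu> * real m / t)\<rceil>)"

end

theory Submission
  imports Defs
begin

lemma hall_s:
  assumes "finite L" "finite R"
    and "\<forall>S\<subseteq>L. (\<Sum>i\<in>S. s i) \<le> card {g\<in>R. \<exists>i\<in>S. (i,g)\<in>E}"
  shows "\<exists>F. F \<subseteq> E \<inter> (L\<times>R) \<and> (\<forall>i\<in>L. card {g. (i,g)\<in>F} = s i) \<and> (\<forall>g. card {i. (i,g)\<in>F} \<le> 1)"
  using assms
proof (induction "sum s L + card L" arbitrary: L R s rule: less_induct)
  case less
  note fin = less.prems(1,2) and H = less.prems(3)
  define nb where "nb R' S = {g\<in>R'. \<exists>i\<in>S. (i,g)\<in>E}" for R' S
  show ?case
  proof (cases "\<forall>i\<in>L. s i = 0")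
    case True
    show ?thesis by (rule exI[of _ "{}"]) (use True in auto)
  next
    case False
    then obtain i0 where i0: "i0 \<in> L" "s i0 > 0" by auto
    show ?thesis
    proof (cases "\<exists>S. S \<subseteq> L \<and> S \<noteq> {} \<and> S \<noteq> L \<and> card (nb R S) \<le> sum s S")
      case True
      then obtain S where S: "S \<subseteq> L" "S \<noteq> {}" "S \<noteq> L" "card (nb R S) \<le> sum s S" by blast
      have finS: "finite S" using S(1) fin(1) finite_subset by blast
      have "sum s S \<le> sum s L" using S(1) fin(1) by (intro sum_mono2) auto
      moreover have "card S < card L" using S fin by (intro psubset_card_mono) auto
      ultimately have lt1: "sum s S + card S < sum s L + card L" by linarith
      have fin1: "finite (nb R S)" using fin(2) unfolding nb_def by auto
      have H1: "\<forall>S'\<subseteq>S. (\<Sum>i\<in>S'. s i) \<le> card {g\<in>nb R S. \<exists>i\<in>S'. (i,g)\<in>E}"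
      proof (intro allI impI)
        fix S' assume "S' \<subseteq> S"
        then have "{g\<in>nb R S. \<exists>i\<in>S'. (i,g)\<in>E} = {g\<in>R. \<exists>i\<in>S'. (i,g)\<in>E}" unfolding nb_def by auto
        then show "(\<Sum>i\<in>S'. s i) \<le> card {g\<in>nb R S. \<exists>i\<in>S'. (i,g)\<in>E}"
          using H[rule_format, of S'] \<open>S' \<subseteq> S\<close> S(1) by (simp add: subset_trans)
      qed
      obtain F1 where F1: "F1 \<subseteq> E \<inter> (S \<times> nb R S)" "\<forall>i\<in>S. card {g. (i,g)\<in>F1} = s i"
        "\<forall>g. card {i. (i,g)\<in>F1} \<le> 1"
        using less.hyps[OF lt1 finS fin1 H1] by blast
      have "sum s (L - S) \<le> sum s L" using fin(1) by (intro sum_mono2) auto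
      moreover have "card (L - S) < card L" using S fin
        by (intro psubset_card_mono) auto
      ultimately have lt2: "sum s (L - S) + card (L - S) < sum s L + card L" by linarith
      have H2: "\<forall>S'\<subseteq>L - S. (\<Sum>i\<in>S'. s i) \<le> card {g\<in>R - nb R S. \<exists>i\<in>S'. (i,g)\<in>E}"
      proof (intro allI impI)
        fix S' assume S': "S' \<subseteq> L - S"
        have eq: "{g\<in>R - nb R S. \<exists>i\<in>S'. (i,g)\<in>E} = nb R (S \<union> S') - nb R S" unfolding nb_def by auto
        have sub: "nb R S \<subseteq> nb R (S \<union> S')" unfolding nb_def by auto
        have finU: "finite (nb R (S \<union> S'))" using fin(2) unfolding nb_def by auto
        have c: "card (nb R (S \<union> S') - nb R S) = card (nb R (S \<union> S')) - card (nb R S)"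
          using card_Diff_subset[OF finite_subset[OF sub finU] sub] .
        have finS': "finite S'" using S' fin(1) finite_subset by blast
        have "sum s (S \<union> S') = sum s S + sum s S'"
          using S' finS finS' by (intro sum.union_disjoint) auto
        moreover have "sum s (S \<union> S') \<le> card (nb R (S \<union> S'))"
        proof -
          have SU: "S \<union> S' \<subseteq> L" using S(1) S' by auto
          show ?thesis using H[rule_format, OF SU] unfolding nb_def by simp
        qed
        ultimately show "(\<Sum>i\<in>S'. s i) \<le> card {g\<in>R - nb R S. \<exists>i\<in>S'. (i,g)\<in>E}"
          unfolding eq c using S(4) by linarith
      qed
      obtain F2 where F2: "F2 \<subseteq> E \<inter> ((L - S) \<times> (R - nb R S))" "\<forall>i\<in>L - S. card {g. (i,g)\<in>F2} = s i"
        "\<forall>g. card {i. (i,g)\<in>F2} \<le> 1"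
        using less.hyps[OF lt2 finite_Diff[OF fin(1)] finite_Diff[OF fin(2)] H2] by blast
      show ?thesis
      proof (rule exI[of _ "F1 \<union> F2"], intro conjI ballI allI)
        show "F1 \<union> F2 \<subseteq> E \<inter> (L \<times> R)" using F1(1) F2(1) S(1) unfolding nb_def by auto
      next
        fix i assume i: "i \<in> L"
        show "card {g. (i, g) \<in> F1 \<union> F2} = s i"
        proof (cases "i \<in> S")
          case True
          then have "{g. (i, g) \<in> F1 \<union> F2} = {g. (i, g) \<in> F1}" using F2(1) by auto
          then show ?thesis using F1(2) True by simp
        next
          case False
          then have "{g. (i, g) \<in> F1 \<union> F2} = {g. (i, g) \<in> F2}" using F1(1) by auto
          then show ?thesis using F2(2) False i by simp
        qed
      next
        fix g
        show "card {i. (i, g) \<in> F1 \<union> F2} \<le> 1"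
        proof (cases "g \<in> nb R S")
          case True
          then have "{i. (i, g) \<in> F1 \<union> F2} = {i. (i, g) \<in> F1}" using F2(1) by auto
          then show ?thesis using F1(3) by metis
        next
          case False
          then have "{i. (i, g) \<in> F1 \<union> F2} = {i. (i, g) \<in> F2}" using F1(1) by auto
          then show ?thesis using F2(3) by metis
        qed
      qed
    next
      case False
      then have strict: "\<And>S. S \<subseteq> L \<Longrightarrow> S \<noteq> {} \<Longrightarrow> S \<noteq> L \<Longrightarrow> sum s S < card (nb R S)"
        using not_le by blast
      have "s i0 \<le> card (nb R {i0})" using H[rule_format, of "{i0}"] i0 unfolding nb_def by simp
      then have "nb R {i0} \<noteq> {}" using i0 by auto
      then obtain g0 where g0: "g0 \<in> R" "(i0, g0) \<in> E" unfolding nb_def by auto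
      define s' where "s' = s(i0 := s i0 - 1)"
      have sumS: "sum s' S = (if i0 \<in> S then sum s S - 1 else sum s S)" if "S \<subseteq> L" for S
      proof -
        have finS: "finite S" using that fin(1) finite_subset by blast
        show ?thesis
        proof (cases "i0 \<in> S")
          case True
          have "sum s' S = s' i0 + sum s' (S - {i0})" using True finS by (simp add: sum.remove)
          moreover have "sum s S = s i0 + sum s (S - {i0})" using True finS by (simp add: sum.remove)
          moreover have "sum s' (S - {i0}) = sum s (S - {i0})" unfolding s'_def by (intro sum.cong) auto
          ultimately show ?thesis using True i0 unfolding s'_def by auto
        next
          case False
          then show ?thesis unfolding s'_def by (auto intro: sum.cong)
        qed
      qed
      have "sum s L > 0" using i0 fin(1)
        using member_le_sum[OF i0(1) _ fin(1), of s] i0(2) by simp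
      then have lt: "sum s' L + card L < sum s L + card L" using sumS[of L] i0 by auto
      have H': "\<forall>S\<subseteq>L. (\<Sum>i\<in>S. s' i) \<le> card {g\<in>R - {g0}. \<exists>i\<in>S. (i,g)\<in>E}"
      proof (intro allI impI)
        fix S assume S: "S \<subseteq> L"
        have eq: "{g\<in>R - {g0}. \<exists>i\<in>S. (i,g)\<in>E} = nb R S - {g0}" unfolding nb_def by auto
        have finN: "finite (nb R S)" using fin(2) unfolding nb_def by auto
        have c: "card (nb R S - {g0}) \<ge> card (nb R S) - 1"
          by (simp add: card_Diff_singleton_if)
        have h: "sum s S \<le> card (nb R S)" using H[rule_format, OF S] unfolding nb_def by simp
        show "(\<Sum>i\<in>S. s' i) \<le> card {g\<in>R - {g0}. \<exists>i\<in>S. (i,g)\<in>E}"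
        proof (cases "i0 \<in> S")
          case True
          then show ?thesis using sumS[OF S] eq c h by simp
        next
          case False
          show ?thesis
          proof (cases "S = {}")
            case True then show ?thesis by simp
          next
            case ne: False
            have "S \<noteq> L" using False i0 by auto
            then have "sum s S < card (nb R S)" using strict S ne by auto
            then show ?thesis using sumS[OF S] False eq c by simp
          qed
        qed
      qed
      obtain F' where F': "F' \<subseteq> E \<inter> (L \<times> (R - {g0}))" "\<forall>i\<in>L. card {g. (i,g)\<in>F'} = s' i"
        "\<forall>g. card {i. (i,g)\<in>F'} \<le> 1"
        using less.hyps[OF lt fin(1) finite_Diff[OF fin(2)] H'] by blast
      show ?thesis
      proof (rule exI[of _ "insert (i0,g0) F'"], intro conjI ballI allI)
        show "insert (i0, g0) F' \<subseteq> E \<inter> (L \<times> R)" using F'(1) g0 i0 by auto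
      next
        fix i assume i: "i \<in> L"
        show "card {g. (i, g) \<in> insert (i0, g0) F'} = s i"
        proof (cases "i = i0")
          case True
          have finF: "finite {g. (i0, g) \<in> F'}"
            using F'(1) by (intro finite_subset[OF _ fin(2)]) auto
          have "{g. (i, g) \<in> insert (i0, g0) F'} = insert g0 {g. (i0, g) \<in> F'}" using True by auto
          moreover have "g0 \<notin> {g. (i0, g) \<in> F'}" using F'(1) by auto
          ultimately have "card {g. (i, g) \<in> insert (i0, g0) F'} = Suc (card {g. (i0, g) \<in> F'})"
            using finF by simp
          then show ?thesis using F'(2) i0 True unfolding s'_def by auto
        next
          case False
          then have "{g. (i, g) \<in> insert (i0, g0) F'} = {g. (i, g) \<in> F'}" by auto
          then show ?thesis using F'(2) i False unfolding s'_def by auto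
        qed
      next
        fix g
        show "card {i. (i, g) \<in> insert (i0, g0) F'} \<le> 1"
        proof (cases "g = g0")
          case True
          then have "{i. (i, g) \<in> insert (i0, g0) F'} = {i0}" using F'(1) by auto
          then show ?thesis by simp
        next
          case False
          then have "{i. (i, g) \<in> insert (i0, g0) F'} = {i. (i, g) \<in> F'}" by auto
          then show ?thesis using F'(3) by metis
        qed
      qed
    qed
  qed
qed

lemma key_real:
  fixes n m k t C :: real
  assumes C: "1 \<le> C" and n: "3 \<le> n" and nm: "n \<le> m" and k: "1 \<le> k" "k \<le> n"
    and t: "1 \<le> t" "t \<le> m" and tk: "n + 1 \<le> k + t"
    and h: "m - t + 1 \<le> k * (C * m / n + 1)"
  shows "(2*k \<ge> n \<and> (n - k) + t - 8*(C+1)*k*t/n \<le> -3) \<or>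
         (2*k < n \<and> 2*t \<ge> m \<and> k + (m - t) - 8*(C+1)*k*t/n \<le> -3) \<or>
         (2*k < n \<and> 2*t < m \<and> k + t - 8*(C+1)*k*t/n \<le> -3)"
proof -
  have npos: "n > 0" using n by simp
  define q where "q = k / n"
  define r where "r = m / n"
  have r1: "r \<ge> 1" unfolding r_def using nm npos by simp
  have X: "8*(C+1)*k*t/n = 8*(C+1)*q*t" unfolding q_def by simp
  have qm: "q * m = k * r" unfolding q_def r_def by simp
  have h': "m - t + 1 \<le> k * C * r + k" using h unfolding r_def by (simp add: algebra_simps)
  consider (A) "2*k \<ge> n" | (B) "2*k < n" "2*t \<ge> m" | (Cc) "2*k < n" "2*t < m" by linarith
  then show ?thesis
  proof cases
    case A
    have "q \<ge> 1/2" unfolding q_def using A npos by (simp add: field_simps)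
    moreover have "(C+1)*q \<ge> 2*q" using C \<open>q \<ge> 1/2\<close> by (intro mult_right_mono) auto
    ultimately have "(C+1)*q \<ge> 1" by linarith
    then have Y: "(C+1)*q*t \<ge> 1*t" using t by (intro mult_right_mono) auto
    have "8*(C+1)*k*t/n = 8*((C+1)*q*t)" using X by simp
    then show ?thesis using A Y tk t by linarith
  next
    case B
    have "q * t \<ge> q * (m/2)" using B by (intro mult_left_mono) (use k npos in \<open>auto simp: q_def\<close>)
    then have "q*t \<ge> k*r/2" using qm by simp
    then have "8*(C+1)*q*t \<ge> 8*(C+1)*(k*r/2)" using C
      by (metis (no_types, opaque_lifting) mult.assoc mult_left_mono add_nonneg_nonneg linorder_le_cases mult_le_0_iff zero_le_one order_trans zero_le_numeral mult_nonneg_nonneg)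
    moreover have "k*r \<ge> k" using r1 k by simp
    moreover have "k*C*r \<ge> 0" using C k r1 by simp
    moreover have "8*(C+1)*(k*r/2) = 4*(k*r) + 4*(C*(k*r))" by (simp add: algebra_simps)
    moreover have "k*C*r = C*(k*r)" by simp
    moreover have "8*(C+1)*k*t/n = 8*(C+1)*q*t" using X by simp
    ultimately show ?thesis using B h' k by linarith
  next
    case Cc
    have "k * C * r + k \<le> k*(C+1)*r" using r1 k C by (simp add: algebra_simps)
    then have "k*(C+1)*r > m/2" using h' Cc by linarith
    then have "k*(C+1)*m/n > m/2" unfolding r_def by simp
    then have "(k*(C+1)/n) * m > (1/2) * m" by simp
    moreover have "m > 0" using nm npos by simp
    ultimately have "k*(C+1)/n > 1/2" using mult_less_cancel_right[of "1/2" m "k*(C+1)/n"] by simp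
    then have "(C+1)*q > 1/2" unfolding q_def by (simp add: mult.commute)
    then have Y: "(C+1)*q*t \<ge> (1/2)*t" using t by (intro mult_right_mono) auto
    have "8*(C+1)*k*t/n = 8*((C+1)*q*t)" using X by simp
    then show ?thesis using Cc Y tk t by linarith
  qed
qed

lemma exp_bound_aux:
  fixes m :: nat and a b :: nat and X :: real
  assumes m: "m \<ge> 1" and ab: "real a + real b - X \<le> -3"
  shows "real m ^ a * real m ^ b * exp (- X * ln (real m)) \<le> 1 / real m ^ 3"
proof -
  define L where "L = ln (real m)"
  have L0: "L \<ge> 0" unfolding L_def using m by simp
  have em: "exp L = real m" unfolding L_def using m by simp
  have "real m ^ a * real m ^ b * exp (- X * L) = exp ((real a + real b - X) * L)"
    by (simp add: em[symmetric] exp_of_nat_mult[symmetric] exp_add[symmetric] algebra_simps)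
  also have "\<dots> \<le> exp (-3 * L)" using ab L0 by (intro exp_mono mult_right_mono) auto
  also have "exp (-3 * L) = 1 / real m ^ 3"
    by (simp add: em[symmetric] exp_of_nat_mult[symmetric] exp_minus divide_inverse mult.commute)
  finally show ?thesis unfolding L_def .
qed

lemma key_term:
  fixes n m k t :: nat and C :: real
  assumes C: "1 \<le> C" and n: "3 \<le> n" and nm: "n \<le> m" and k: "1 \<le> k" "k \<le> n"
    and t: "1 \<le> t" "t \<le> m" and tk: "n + 1 \<le> k + t"
    and h: "real m - real t + 1 \<le> real k * (C * real m / real n + 1)"
  shows "real (n choose k) * real (m choose t) * exp (- (8*(C+1)*ln (real m) / real n) * real k * real t)
         \<le> 1 / real m ^ 3"
proof -
  have m1: "m \<ge> 1" using n nm by simp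
  have e: "exp (- (8*(C+1)*ln (real m) / real n) * real k * real t) = exp (- (8*(C+1)*real k*real t/real n) * ln (real m))"
    by (rule arg_cong[where f=exp]) (simp add: field_simps)
  have bn: "real (n choose j) \<le> real m ^ j" for j
  proof -
    have "n choose j \<le> n ^ j" by (cases "j \<le> n") (auto simp: binomial_le_pow binomial_eq_0)
    also have "\<dots> \<le> m ^ j" using nm by (intro power_mono) auto
    finally show ?thesis by (metis of_nat_le_iff of_nat_power)
  qed
  have bm: "real (m choose j) \<le> real m ^ j" for j
  proof -
    have "m choose j \<le> m ^ j" by (cases "j \<le> m") (auto simp: binomial_le_pow binomial_eq_0)
    then show ?thesis by (metis of_nat_le_iff of_nat_power)
  qed
  have sn: "n choose k = n choose (n - k)" using k by (intro binomial_symmetric) simp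
  have sm: "m choose t = m choose (m - t)" using t by (intro binomial_symmetric) simp
  have nonneg: "0 \<le> exp (- (8*(C+1)*real k*real t/real n) * ln (real m))" by simp
  have main: "\<exists>a b. real (n choose k) \<le> real m ^ a \<and> real (m choose t) \<le> real m ^ b \<and>
      real a + real b - 8*(C+1)*real k*real t/real n \<le> -3"
  proof -
    have tk': "real n + 1 \<le> real k + real t" using tk by linarith
    have n': "3 \<le> real n" using n by simp
    have nm': "real n \<le> real m" using nm by simp
    have k': "1 \<le> real k" "real k \<le> real n" using k by auto
    have t': "1 \<le> real t" "real t \<le> real m" using t by auto
    note D = key_real[OF C n' nm' k' t' tk' h]
    have dk: "real (n - k) = real n - real k" using k by (simp add: of_nat_diff)
    have dt: "real (m - t) = real m - real t" using t by (simp add: of_nat_diff)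
    show ?thesis
    proof (rule disjE[OF D])
      assume "2 * real k \<ge> real n \<and> (real n - real k) + real t - 8*(C+1)*real k*real t/real n \<le> -3"
      then show ?thesis using bn[of "n-k"] bm[of t] sn dk by (intro exI[of _ "n-k"] exI[of _ t]) simp
    next
      assume "(2*real k < real n \<and> 2*real t \<ge> real m \<and> real k + (real m - real t) - 8*(C+1)*real k*real t/real n \<le> -3) \<or>
         (2*real k < real n \<and> 2*real t < real m \<and> real k + real t - 8*(C+1)*real k*real t/real n \<le> -3)"
      then show ?thesis
      proof
        assume "2*real k < real n \<and> 2*real t \<ge> real m \<and> real k + (real m - real t) - 8*(C+1)*real k*real t/real n \<le> -3"
        then show ?thesis using bn[of k] bm[of "m-t"] sm dt by (intro exI[of _ k] exI[of _ "m-t"]) simp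
      next
        assume "2*real k < real n \<and> 2*real t < real m \<and> real k + real t - 8*(C+1)*real k*real t/real n \<le> -3"
        then show ?thesis using bn[of k] bm[of t] by (intro exI[of _ k] exI[of _ t]) simp
      qed
    qed
  qed
  then obtain a b where ab: "real (n choose k) \<le> real m ^ a" "real (m choose t) \<le> real m ^ b"
      "real a + real b - 8*(C+1)*real k*real t/real n \<le> -3" by blast
  have "real (n choose k) * real (m choose t) * exp (- (8*(C+1)*real k*real t/real n) * ln (real m))
     \<le> real m ^ a * real m ^ b * exp (- (8*(C+1)*real k*real t/real n) * ln (real m))"
    using ab(1,2) nonneg by (intro mult_right_mono mult_mono) auto
  also have "\<dots> \<le> 1 / real m ^ 3" by (rule exp_bound_aux[OF m1 ab(3)])
  finally show ?thesis unfolding e .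
qed

lemma bad_set_PiE:
  assumes "space D = UNIV" "J \<subseteq> I"
  shows "{u \<in> space (PiM I (\<lambda>_. D)). \<forall>ij\<in>J. u ij < (\<tau>::real)} =
         PiE I (\<lambda>ij. if ij \<in> J then {..<\<tau>} else UNIV)"
proof (intro equalityI subsetI)
  fix u assume "u \<in> {u \<in> space (PiM I (\<lambda>_. D)). \<forall>ij\<in>J. u ij < \<tau>}"
  then show "u \<in> PiE I (\<lambda>ij. if ij \<in> J then {..<\<tau>} else UNIV)"
    using assms by (auto simp: space_PiM PiE_iff)
next
  fix u assume u: "u \<in> PiE I (\<lambda>ij. if ij \<in> J then {..<\<tau>} else UNIV)"
  have "\<forall>ij\<in>J. u ij < \<tau>"
  proof
    fix ij assume "ij \<in> J"
    then have "ij \<in> I" using assms by auto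
    then have "u ij \<in> (if ij \<in> J then {..<\<tau>} else UNIV)" using u by (auto simp: PiE_iff)
    then show "u ij < \<tau>" using \<open>ij \<in> J\<close> by simp
  qed
  moreover have "u \<in> space (PiM I (\<lambda>_. D))" using u assms by (auto simp: space_PiM PiE_iff)
  ultimately show "u \<in> {u \<in> space (PiM I (\<lambda>_. D)). \<forall>ij\<in>J. u ij < \<tau>}" by simp
qed

lemma bad_meas:
  assumes D: "prob_space D" "space D = UNIV" "sets D = sets borel" and I: "finite I" "J \<subseteq> I"
  shows "{u \<in> space (PiM I (\<lambda>_. D)). \<forall>ij\<in>J. u ij < (\<tau>::real)} \<in> sets (PiM I (\<lambda>_. D))"
    and "measure (PiM I (\<lambda>_. D)) {u \<in> space (PiM I (\<lambda>_. D)). \<forall>ij\<in>J. u ij < \<tau>} = measure D {..<\<tau>} ^ card J"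
proof -
  note eq = bad_set_PiE[OF D(2) I(2), of \<tau>]
  have A: "(if ij \<in> J then {..<\<tau>} else UNIV) \<in> sets D" for ij
    using D by auto
  show "{u \<in> space (PiM I (\<lambda>_. D)). \<forall>ij\<in>J. u ij < \<tau>} \<in> sets (PiM I (\<lambda>_. D))"
    unfolding eq by (intro sets_PiM_I_finite I(1) A)
  interpret product_sigma_finite "\<lambda>_. D"
    unfolding product_sigma_finite_def using D(1) prob_space_imp_sigma_finite by blast
  interpret P: prob_space D by (rule D(1))
  have "emeasure (PiM I (\<lambda>_. D)) (PiE I (\<lambda>ij. if ij \<in> J then {..<\<tau>} else UNIV))
      = (\<Prod>ij\<in>I. emeasure D (if ij \<in> J then {..<\<tau>} else UNIV))"
    by (rule emeasure_PiM[OF I(1)]) (use A in auto)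
  also have "\<dots> = (\<Prod>ij\<in>I. if ij \<in> J then ennreal (measure D {..<\<tau>}) else 1)"
    by (intro prod.cong refl) (use D(2) P.prob_space P.emeasure_eq_measure in auto)
  also have "\<dots> = (\<Prod>ij\<in>J. ennreal (measure D {..<\<tau>}))"
    using I by (simp add: prod.If_cases Int_absorb1)
  also have "\<dots> = ennreal (measure D {..<\<tau>} ^ card J)"
    by (simp add: ennreal_power)
  finally show "measure (PiM I (\<lambda>_. D)) {u \<in> space (PiM I (\<lambda>_. D)). \<forall>ij\<in>J. u ij < \<tau>} = measure D {..<\<tau>} ^ card J"
    unfolding eq measure_def by simp
qed

lemma good_meas:
  fixes n m :: nat and \<tau> :: real
  assumes D: "space D = UNIV" "sets D = sets borel"
  shows "{u \<in> space (PiM ({..<n}\<times>{..<m}) (\<lambda>_. D)). Q (threshold_graph n m u \<tau>)} \<in> sets (PiM ({..<n}\<times>{..<m}) (\<lambda>_. D))"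
proof -
  define I where "I = {..<n}\<times>{..<m}"
  define A where "A E0 = PiE I (\<lambda>ij. if ij \<in> E0 then {\<tau>..} else {..<\<tau>})" for E0
  have eq: "{u \<in> space (PiM I (\<lambda>_. D)). Q (threshold_graph n m u \<tau>)} = (\<Union>E0\<in>{E0\<in>Pow I. Q E0}. A E0)"
  proof (intro equalityI subsetI)
    fix u assume u: "u \<in> {u \<in> space (PiM I (\<lambda>_. D)). Q (threshold_graph n m u \<tau>)}"
    have "threshold_graph n m u \<tau> \<in> {E0\<in>Pow I. Q E0}" using u unfolding threshold_graph_def I_def by auto
    moreover have "u \<in> A (threshold_graph n m u \<tau>)"
      using u D unfolding A_def threshold_graph_def I_def by (auto simp: space_PiM PiE_iff)
    ultimately show "u \<in> (\<Union>E0\<in>{E0\<in>Pow I. Q E0}. A E0)" by blast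
  next
    fix u assume "u \<in> (\<Union>E0\<in>{E0\<in>Pow I. Q E0}. A E0)"
    then obtain E0 where E0: "E0 \<subseteq> I" "Q E0" "u \<in> A E0" by auto
    have "threshold_graph n m u \<tau> = E0"
    proof (intro equalityI subsetI)
      fix ij assume "ij \<in> threshold_graph n m u \<tau>"
      then obtain a b where ab: "ij = (a,b)" "a < n" "b < m" "\<tau> \<le> u (a,b)" unfolding threshold_graph_def by auto
      then have "u (a,b) \<in> (if (a,b) \<in> E0 then {\<tau>..} else {..<\<tau>})" using E0(3) unfolding A_def I_def by (auto simp: PiE_iff)
      then show "ij \<in> E0" using ab by (auto split: if_splits)
    next
      fix ij assume ij: "ij \<in> E0"
      then obtain a b where ab: "ij = (a,b)" "a < n" "b < m" using E0(1) unfolding I_def by auto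
      then have "u (a,b) \<in> (if (a,b) \<in> E0 then {\<tau>..} else {..<\<tau>})" using E0(3) unfolding A_def I_def by (auto simp: PiE_iff)
      then show "ij \<in> threshold_graph n m u \<tau>" using ab ij unfolding threshold_graph_def by auto
    qed
    moreover have "u \<in> space (PiM I (\<lambda>_. D))" using E0 D unfolding A_def by (auto simp: space_PiM PiE_iff)
    ultimately show "u \<in> {u \<in> space (PiM I (\<lambda>_. D)). Q (threshold_graph n m u \<tau>)}" using E0 by auto
  qed
  have "(\<Union>E0\<in>{E0\<in>Pow I. Q E0}. A E0) \<in> sets (PiM I (\<lambda>_. D))"
  proof (rule sets.finite_UN)
    show "finite {E0\<in>Pow I. Q E0}" unfolding I_def by auto
    fix E0 show "A E0 \<in> sets (PiM I (\<lambda>_. D))" unfolding A_def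
      by (intro sets_PiM_I_finite) (auto simp: I_def D)
  qed
  then show ?thesis using eq unfolding I_def by simp
qed

lemma upper_tail:
  fixes f :: "real \<Rightarrow> real"
  assumes D: "prob_space D" "D = density lborel (\<lambda>x. ennreal (f x * indicator {0..1} x))"
    and f: "f \<in> borel_measurable borel" and fa: "\<forall>x\<in>{0..1}. \<alpha> \<le> f x"
    and t: "0 \<le> \<tau>" "\<tau> \<le> 1" and a: "0 < \<alpha>"
  shows "measure D {..<\<tau>} \<le> 1 - \<alpha> * (1 - \<tau>)"
proof -
  interpret P: prob_space D by (rule D(1))
  have sD: "sets D = sets borel" using D(2) by simp
  have "emeasure D {\<tau>..} = (\<integral>\<^sup>+x. ennreal (f x * indicator {0..1} x) * indicator {\<tau>..} x \<partial>lborel)"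
    unfolding D(2) by (rule emeasure_density) (use f in auto)
  also have "\<dots> \<ge> (\<integral>\<^sup>+x. ennreal \<alpha> * indicator {\<tau>..1} x \<partial>lborel)"
    by (intro nn_integral_mono) (use fa t in \<open>auto simp: indicator_def intro!: ennreal_leI\<close>)
  moreover have "(\<integral>\<^sup>+x. ennreal \<alpha> * indicator {\<tau>..1} x \<partial>lborel) = ennreal (\<alpha> * (1 - \<tau>))"
    using t a by (simp add: nn_integral_cmult_indicator ennreal_mult)
  ultimately have "ennreal (\<alpha> * (1 - \<tau>)) \<le> ennreal (measure D {\<tau>..})"
    using P.emeasure_eq_measure by metis
  then have ge: "\<alpha> * (1 - \<tau>) \<le> measure D {\<tau>..}"
    by (simp add: ennreal_le_iff)
  have "measure D {..<\<tau>} = 1 - measure D {\<tau>..}"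
  proof -
    have "{..<\<tau>} = space D - {\<tau>..}" using D(2) by auto
    then show ?thesis using P.prob_compl[of "{\<tau>..}"] sD by simp
  qed
  then show ?thesis using ge by simp
qed

lemma sum_inv_choose:
  assumes "finite A"
  shows "(\<Sum>S\<in>Pow A. 1 / real (card A choose card S)) = real (card A) + 1"
proof -
  have "(\<Sum>S\<in>Pow A. 1 / real (card A choose card S)) =
        (\<Sum>k\<in>{0..card A}. \<Sum>S\<in>{S\<in>Pow A. card S = k}. 1 / real (card A choose card S))"
    by (rule sum.group[symmetric]) (use assms in \<open>auto simp: card_mono\<close>)
  also have "\<dots> = (\<Sum>k\<in>{0..card A}. 1)"
  proof (intro sum.cong refl)
    fix k assume k: "k \<in> {0..card A}"
    have "(\<Sum>S\<in>{S\<in>Pow A. card S = k}. 1 / real (card A choose card S)) =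
          (\<Sum>S\<in>{S\<in>Pow A. card S = k}. 1 / real (card A choose k))" by (intro sum.cong) auto
    also have "\<dots> = real (card {S. S \<subseteq> A \<and> card S = k}) / real (card A choose k)" by simp
    also have "\<dots> = 1" using n_subsets[OF assms, of k] k by simp
    finally show "(\<Sum>S\<in>{S\<in>Pow A. card S = k}. 1 / real (card A choose card S)) = 1" .
  qed
  finally show ?thesis by simp
qed

lemma ev_N0:
  fixes \<alpha> C \<eta> K' :: real
  assumes "0 < \<alpha>" "1 \<le> C" "0 < \<eta>"
  shows "\<exists>N0::nat. \<forall>n\<ge>N0. 3 \<le> n \<and> 8*(C+1)*(ln K' + 2*ln (real n)) < \<alpha> * real n \<and> 4 / real n \<le> \<eta>"
proof -
  have lim: "(\<lambda>n::nat. ln (real n) / real n) \<longlonglongrightarrow> 0"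
    by (rule filterlim_compose[OF ln_x_over_x_tendsto_0 filterlim_real_sequentially])
  have c: "\<alpha> / (32*(C+1)) > 0" using assms by simp
  have e1: "eventually (\<lambda>n::nat. ln (real n) / real n < \<alpha> / (32*(C+1))) sequentially"
    using order_tendstoD(2)[OF lim c] .
  have e2: "eventually (\<lambda>n::nat. 16*(C+1)*\<bar>ln K'\<bar>/\<alpha> + 4/\<eta> + 3 < real n) sequentially"
    by (rule eventually_compose_filterlim[OF eventually_gt_at_top filterlim_real_sequentially])
  have "eventually (\<lambda>n::nat. 3 \<le> n \<and> 8*(C+1)*(ln K' + 2*ln (real n)) < \<alpha> * real n \<and> 4 / real n \<le> \<eta>) sequentially"
    using e1 e2
  proof eventually_elim
    case (elim n)
    have pos: "16*(C+1)*\<bar>ln K'\<bar>/\<alpha> \<ge> 0" "4/\<eta> \<ge> 0" using assms by auto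
    then have n3: "real n > 3" using elim(2) by linarith
    then have npos: "real n > 0" by simp
    have C1: "16*(C+1) > 0" using assms by simp
    have "ln (real n) < \<alpha> / (32*(C+1)) * real n" using elim(1) npos by (simp add: divide_less_eq)
    then have "16*(C+1)*ln (real n) < 16*(C+1)*(\<alpha> / (32*(C+1)) * real n)"
      using C1 by (intro mult_strict_left_mono) auto
    also have "16*(C+1)*(\<alpha> / (32*(C+1)) * real n) = \<alpha> * real n / 2" using C1 by (simp add: field_simps)
    finally have a1: "16*(C+1)*ln (real n) < \<alpha> * real n / 2" .
    have "16*(C+1)*\<bar>ln K'\<bar>/\<alpha> < real n" using elim(2) pos by linarith
    then have h2: "16*(C+1)*\<bar>ln K'\<bar> < real n * \<alpha>" using assms by (simp add: pos_divide_less_eq)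
    have "8*(C+1)*ln K' \<le> 8*(C+1)*\<bar>ln K'\<bar>" using assms by (intro mult_left_mono) auto
    moreover have "16*(C+1)*\<bar>ln K'\<bar> = 2*(8*(C+1)*\<bar>ln K'\<bar>)" by simp
    ultimately have a2: "8*(C+1)*ln K' < \<alpha> * real n / 2" using h2 by (simp only: mult.commute[of "real n"])
    have "4/\<eta> < real n" using elim(2) pos by linarith
    then have "4 < real n * \<eta>" using assms by (simp add: pos_divide_less_eq)
    then have "4 / real n < \<eta>" using npos by (simp add: pos_divide_less_eq mult.commute)
    then have "4 / real n \<le> \<eta>" by simp
    moreover have "3 \<le> n" using n3 by simp
    ultimately show ?case using a1 a2 by (simp add: algebra_simps)
  qed
  then show ?thesis unfolding eventually_sequentially by blast
qed

lemma s_facts: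
  fixes n m :: nat and w :: "nat \<Rightarrow> real"
  assumes n: "1 \<le> n" and w: "\<forall>i<n. 0 < w i" and wr: "Max (w ` {..<n}) / Min (w ` {..<n}) \<le> C"
    and mm: "(1 + \<epsilon>) * real n / (1 - \<mu>) \<le> real m" and mu: "0 < \<mu>" "\<mu> < 1" and eps: "0 < \<epsilon>"
    and tau: "0 < tau_param \<alpha> C n m"
  shows "\<forall>i<n. 1 \<le> s_param \<alpha> C \<epsilon> \<mu> n m w i"
    and "\<forall>i<n. real (s_param \<alpha> C \<epsilon> \<mu> n m w i) \<le> C * real m / real n + 1"
    and "(\<Sum>i<n. s_param \<alpha> C \<epsilon> \<mu> n m w i) \<le> m"
proof -
  define \<tau> where "\<tau> = tau_param \<alpha> C n m"
  define W where "W = (\<Sum>j<n. w j)"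
  define lam where "lam = \<mu> + \<epsilon> * (1 - \<mu>) / (1 + \<epsilon>)"
  define x where "x i = lam * real m * (w i / W)" for i
  have sx: "s_param \<alpha> C \<epsilon> \<mu> n m w i = nat \<lceil>x i\<rceil>" for i
  proof -
    define c1 where "c1 = 1 + \<epsilon> / (1 + \<epsilon>) * ((1 - \<mu>) / \<mu>)"
    have d: "1 + delta_param \<epsilon> \<mu> \<tau> = c1 * \<tau>" unfolding delta_param_def c1_def by simp
    have e1: "1 + \<epsilon> \<noteq> 0" "\<mu> \<noteq> 0" using mu eps by auto
    have "\<epsilon> / (1 + \<epsilon>) * ((1 - \<mu>) / \<mu>) * \<mu> = \<epsilon> * (1 - \<mu>) / (1 + \<epsilon>)" using e1 by simp
    then have c1: "c1 * \<mu> = lam" unfolding c1_def lam_def by (simp add: distrib_right)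
    have tne: "\<tau> \<noteq> 0" using tau unfolding \<tau>_def by simp
    have "(1 + delta_param \<epsilon> \<mu> \<tau>) * (w i / W) * (\<mu> * real m / \<tau>) = (c1 * \<mu>) * real m * (w i / W) * (\<tau> / \<tau>)"
      unfolding d by (simp add: algebra_simps)
    also have "\<dots> = x i" unfolding c1 x_def using tne by simp
    finally have "(1 + delta_param \<epsilon> \<mu> \<tau>) * (w i / W) * (\<mu> * real m / \<tau>) = x i" .
    then show ?thesis unfolding s_param_def Let_def \<tau>_def W_def by simp
  qed
  have Wpos: "W > 0" unfolding W_def using w n by (intro sum_pos) (auto simp: lessThan_empty_iff)
  have npos: "real n > 0" using n by simp
  have lam0: "lam > 0" unfolding lam_def using mu eps by (simp add: field_simps)
  have lam1: "1 - lam = (1 - \<mu>) / (1 + \<epsilon>)" unfolding lam_def using eps by (simp add: field_simps)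
  have nle: "real n \<le> (1 - \<mu>) * real m / (1 + \<epsilon>)" using mm mu eps by (simp add: field_simps)
  have "lam = 1 - (1 - \<mu>) / (1 + \<epsilon>)" using lam1 by simp
  then have "lam * real m = (1 - (1 - \<mu>) / (1 + \<epsilon>)) * real m" by simp
  also have "\<dots> = real m - (1 - \<mu>) / (1 + \<epsilon>) * real m" by (simp add: left_diff_distrib)
  also have "(1 - \<mu>) / (1 + \<epsilon>) * real m = (1 - \<mu>) * real m / (1 + \<epsilon>)" by simp
  finally have "lam * real m = real m - (1 - \<mu>) * real m / (1 + \<epsilon>)" .
  with nle have lamm: "lam * real m + real n \<le> real m" by linarith
  have "(1 + \<epsilon>) * real n / (1 - \<mu>) > 0" using mu eps npos by simp
  then have mpos: "real m > 0" using mm by linarith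
  have xpos: "x i > 0" if "i < n" for i unfolding x_def using lam0 mpos w that Wpos by simp
  show "\<forall>i<n. 1 \<le> s_param \<alpha> C \<epsilon> \<mu> n m w i"
  proof (intro allI impI)
    fix i assume "i < n"
    then have "1 \<le> \<lceil>x i\<rceil>" using xpos by simp
    then show "1 \<le> s_param \<alpha> C \<epsilon> \<mu> n m w i" unfolding sx by linarith
  qed
  have sle: "real (s_param \<alpha> C \<epsilon> \<mu> n m w i) \<le> x i + 1" if "i < n" for i
  proof -
    have "real_of_int \<lceil>x i\<rceil> < x i + 1" using ceiling_correct[of "x i"] by linarith
    moreover have "real (nat \<lceil>x i\<rceil>) = real_of_int \<lceil>x i\<rceil>" using xpos[OF that] by simp
    ultimately show ?thesis unfolding sx by linarith
  qed
  have fin: "finite (w ` {..<n})" "w ` {..<n} \<noteq> {}" using n by (auto simp: lessThan_empty_iff)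
  have minpos: "Min (w ` {..<n}) > 0" using fin w by auto
  have maxle: "Max (w ` {..<n}) \<le> C * Min (w ` {..<n})" using wr minpos by (simp add: field_simps)
  have WMin: "real n * Min (w ` {..<n}) \<le> W"
  proof -
    have "(\<Sum>j<n. Min (w ` {..<n})) \<le> W" unfolding W_def using fin by (intro sum_mono) auto
    then show ?thesis by simp
  qed
  have "Min (w ` {..<n}) \<le> Max (w ` {..<n})" 
  proof -
    have "w 0 \<in> w ` {..<n}" using n by auto
    then show ?thesis using fin(1) by (meson Max_ge Min_le order_trans)
  qed
  then have "Max (w ` {..<n}) / Min (w ` {..<n}) > 0" using minpos by simp
  then have C0: "C > 0" using wr by linarith
  have wiW: "w i / W \<le> C / real n" if "i < n" for i
  proof -
    have "w i \<le> Max (w ` {..<n})" using fin that by auto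
    also have "\<dots> \<le> C * Min (w ` {..<n})" by (rule maxle)
    finally have "w i \<le> C * Min (w ` {..<n})" .
    then have "w i * real n \<le> (C * Min (w ` {..<n})) * real n" by (rule mult_right_mono) simp
    then have "w i * real n \<le> C * (real n * Min (w ` {..<n}))" by (simp add: algebra_simps)
    also have "\<dots> \<le> C * W" using WMin C0 by (intro mult_left_mono) auto
    finally show ?thesis using Wpos npos by (simp add: field_simps)
  qed
  have "(1 - \<mu>) / (1 + \<epsilon>) > 0" using mu eps by simp
  then have lam_le1: "lam \<le> 1" using lam1 by linarith
  show "\<forall>i<n. real (s_param \<alpha> C \<epsilon> \<mu> n m w i) \<le> C * real m / real n + 1"
  proof (intro allI impI)
    fix i assume i: "i < n"
    have "x i \<le> 1 * real m * (C / real n)" unfolding x_def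
      using lam_le1 lam0 wiW[OF i] xpos[OF i] mpos w i Wpos
      by (intro mult_mono) (auto)
    moreover have "1 * real m * (C / real n) = C * real m / real n" by simp
    ultimately show "real (s_param \<alpha> C \<epsilon> \<mu> n m w i) \<le> C * real m / real n + 1" using sle[OF i] by linarith
  qed
  have "real (\<Sum>i<n. s_param \<alpha> C \<epsilon> \<mu> n m w i) = (\<Sum>i<n. real (s_param \<alpha> C \<epsilon> \<mu> n m w i))" by simp
  also have "\<dots> \<le> (\<Sum>i<n. x i + 1)" using sle by (intro sum_mono) auto
  also have "\<dots> = lam * real m * ((\<Sum>i<n. w i) / W) + real n"
    unfolding x_def by (simp add: sum.distrib sum_distrib_left sum_divide_distrib)
  also have "\<dots> = lam * real m + real n" unfolding W_def using Wpos W_def by simp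
  also have "\<dots> \<le> real m" by (rule lamm)
  finally show "(\<Sum>i<n. s_param \<alpha> C \<epsilon> \<mu> n m w i) \<le> m" by linarith
qed

theorem lemma5:
  fixes D :: "real measure" and f :: "real \<Rightarrow> real"
    and \<alpha> \<beta> \<mu> C \<epsilon> K :: real
  assumes "prob_space D"
    and "D = density lborel (\<lambda>x. ennreal (f x * indicator {0..1} x))"
    and "f \<in> borel_measurable borel"
    and "0 < \<alpha>"
    and "\<forall>x\<in>{0..1}. \<alpha> \<le> f x \<and> f x \<le> \<beta>"
    and "\<mu> = (\<integral>x. x \<partial>D)"
    and "0 < \<mu>" and "\<mu> < 1"
    and "1 \<le> C"
    and "0 < \<epsilon>" and "\<epsilon> < 1"
  shows "\<forall>\<eta>>0. \<exists>N0::nat. \<forall>n\<ge>N0. \<forall>(m::nat) (w::nat \<Rightarrow> real).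
           ((\<forall>i<n. 0 < w i)
            \<and> Max (w ` {..<n}) / Min (w ` {..<n}) \<le> C
            \<and> (1 + \<epsilon>) * real n / (1 - \<mu>) \<le> real m
            \<and> real m \<le> K * real n * ln (real n))
           \<longrightarrow> measure (PiM ({..<n} \<times> {..<m}) (\<lambda>_. D))
                 {u \<in> space (PiM ({..<n} \<times> {..<m}) (\<lambda>_. D)).
                    \<exists>F. left_saturating_s_matching
                          (threshold_graph n m u (tau_param \<alpha> C n m)) {..<n} {..<m}
                          (s_param \<alpha> C \<epsilon> \<mu> n m w) F}
               \<ge> 1 - \<eta>"
proof (intro allI impI)
  note DP = assms(1) and Dd = assms(2) and fm = assms(3) and a0 = assms(4) and fb = assms(5)
    and mu = assms(7,8) and C1 = assms(9) and eps = assms(10,11)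
  have spD: "space D = UNIV" using Dd by simp
  have sD: "sets D = sets borel" using Dd by simp
  fix \<eta> :: real assume eta: "\<eta> > 0"
  define K' where "K' = max K 1"
  obtain N0 where N0: "\<forall>n\<ge>N0. 3 \<le> n \<and> 8*(C+1)*(ln K' + 2*ln (real n)) < \<alpha> * real n \<and> 4 / real n \<le> \<eta>"
    using ev_N0[OF a0 C1 eta, of K'] by blast
  show "\<exists>N0::nat. \<forall>n\<ge>N0. \<forall>(m::nat) (w::nat \<Rightarrow> real).
           ((\<forall>i<n. 0 < w i)
            \<and> Max (w ` {..<n}) / Min (w ` {..<n}) \<le> C
            \<and> (1 + \<epsilon>) * real n / (1 - \<mu>) \<le> real m
            \<and> real m \<le> K * real n * ln (real n))
           \<longrightarrow> measure (PiM ({..<n} \<times> {..<m}) (\<lambda>_. D))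
                 {u \<in> space (PiM ({..<n} \<times> {..<m}) (\<lambda>_. D)).
                    \<exists>F. left_saturating_s_matching
                          (threshold_graph n m u (tau_param \<alpha> C n m)) {..<n} {..<m}
                          (s_param \<alpha> C \<epsilon> \<mu> n m w) F}
               \<ge> 1 - \<eta>"
  proof (intro exI[of _ N0] allI impI)
    fix n m :: nat and w :: "nat \<Rightarrow> real"
    assume nN: "N0 \<le> n" and H: "(\<forall>i<n. 0 < w i)
            \<and> Max (w ` {..<n}) / Min (w ` {..<n}) \<le> C
            \<and> (1 + \<epsilon>) * real n / (1 - \<mu>) \<le> real m
            \<and> real m \<le> K * real n * ln (real n)"
    from H have w: "\<forall>i<n. 0 < w i" and wr: "Max (w ` {..<n}) / Min (w ` {..<n}) \<le> C"
      and mm: "(1 + \<epsilon>) * real n / (1 - \<mu>) \<le> real m" and mK: "real m \<le> K * real n * ln (real n)"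
      by auto
    from N0 nN have n3: "3 \<le> n" and hln: "8*(C+1)*(ln K' + 2*ln (real n)) < \<alpha> * real n"
      and heta: "4 / real n \<le> \<eta>" by auto
    have npos: "real n > 0" using n3 by simp
    have "real n * (1 - \<mu>) \<le> (1 + \<epsilon>) * real n" using mu eps npos by (simp add: algebra_simps)
    then have "real n \<le> (1 + \<epsilon>) * real n / (1 - \<mu>)" using mu by (simp add: pos_le_divide_eq)
    then have nm: "n \<le> m" using mm by linarith
    have mpos: "real m > 0" using nm npos by linarith
    have lnm: "ln (real m) \<le> ln K' + 2 * ln (real n)"
    proof -
      have lnn: "0 < ln (real n)" "ln (real n) \<le> real n" using n3 ln_le_minus_one[of "real n"] by auto
      have "real n * ln (real n) > 0" using lnn npos by simp
      have Kpos: "K > 0"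
      proof (rule ccontr)
        assume "\<not> K > 0"
        then have "K * (real n * ln (real n)) \<le> 0" using \<open>real n * ln (real n) > 0\<close>
          by (intro mult_nonpos_nonneg) auto
        then show False using mK mpos by (simp add: mult.assoc)
      qed
      have "K * real n * ln (real n) \<le> K' * (real n * real n)"
      proof -
        have "K * (real n * ln (real n)) \<le> K' * (real n * ln (real n))"
          unfolding K'_def using \<open>real n * ln (real n) > 0\<close> by (intro mult_right_mono) auto
        also have "\<dots> \<le> K' * (real n * real n)" unfolding K'_def using lnn npos
          by (intro mult_left_mono) auto
        finally show ?thesis by (simp add: mult.assoc)
      qed
      then have "real m \<le> K' * (real n * real n)" using mK by linarith
      then have "ln (real m) \<le> ln (K' * (real n * real n))" using mpos by simp
      also have "\<dots> = ln K' + 2 * ln (real n)" unfolding K'_def using npos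
        by (simp add: ln_mult)
      finally show ?thesis .
    qed
    define \<tau> where "\<tau> = tau_param \<alpha> C n m"
    define p0 where "p0 = 8*(C+1)*ln (real m) / real n"
    have lnm0: "ln (real m) \<ge> 0" using nm n3 by simp
    have "8*(C+1)*ln (real m) < \<alpha> * real n"
      using lnm hln C1 by (smt (verit) mult_left_mono)
    then have "8*(C+1)*ln (real m) / (\<alpha> * real n) < 1" using a0 npos by simp
    then have tau0: "0 < \<tau>" unfolding \<tau>_def tau_param_def by simp
    have tau1: "\<tau> \<le> 1" unfolding \<tau>_def tau_param_def using C1 lnm0 a0 npos by simp
    have p0eq: "\<alpha> * (1 - \<tau>) = p0" unfolding \<tau>_def tau_param_def p0_def using a0 npos by simp
    define s where "s = s_param \<alpha> C \<epsilon> \<mu> n m w"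
    have n1: "1 \<le> n" using n3 by simp
    note sf = s_facts[OF n1 w wr mm mu eps(1) tau0[unfolded \<tau>_def], folded s_def]
    have s1: "\<And>i. i < n \<Longrightarrow> 1 \<le> s i" and s2: "\<And>i. i < n \<Longrightarrow> real (s i) \<le> C * real m / real n + 1"
      and s3: "sum s {..<n} \<le> m" using sf by auto
    define I where "I = {..<n} \<times> {..<m}"
    define P where "P = PiM I (\<lambda>_. D)"
    interpret P: prob_space P unfolding P_def by (intro prob_space_PiM DP)
    define good where "good = {u \<in> space P. \<exists>F. left_saturating_s_matching
                          (threshold_graph n m u \<tau>) {..<n} {..<m} s F}"
    have goodm: "good \<in> sets P" unfolding good_def P_def I_def
      by (rule good_meas[OF spD sD])
    define V where "V = {ST. fst ST \<subseteq> {..<n} \<and> snd ST \<subseteq> {..<m} \<and> m + 1 \<le> card (snd ST) + sum s (fst ST)}"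
    define Bad where "Bad ST = {u \<in> space P. \<forall>ij\<in>fst ST \<times> snd ST. u ij < \<tau>}" for ST
    have finV: "finite V" 
      by (rule finite_subset[of _ "Pow {..<n} \<times> Pow {..<m}"]) (auto simp: V_def)
    have cover: "space P - good \<subseteq> (\<Union>ST\<in>V. Bad ST)"
    proof
      fix u assume u: "u \<in> space P - good"
      define E where "E = threshold_graph n m u \<tau>"
      have "\<not> (\<forall>S\<subseteq>{..<n}. (\<Sum>i\<in>S. s i) \<le> card {g\<in>{..<m}. \<exists>i\<in>S. (i,g)\<in>E})"
      proof
        assume hall: "\<forall>S\<subseteq>{..<n}. (\<Sum>i\<in>S. s i) \<le> card {g\<in>{..<m}. \<exists>i\<in>S. (i,g)\<in>E}"
        obtain F where F: "F \<subseteq> E \<inter> ({..<n}\<times>{..<m})" "\<forall>i\<in>{..<n}. card {g. (i,g)\<in>F} = s i"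
            "\<forall>g. card {i. (i,g)\<in>F} \<le> 1"
          using hall_s[OF finite_lessThan finite_lessThan hall] by blast
        have "left_saturating_s_matching E {..<n} {..<m} s F"
          unfolding left_saturating_s_matching_def s_matching_def using F by auto
        then have "u \<in> good" using u unfolding good_def E_def by auto
        then show False using u by simp
      qed
      then obtain S where S: "S \<subseteq> {..<n}" "card {g\<in>{..<m}. \<exists>i\<in>S. (i,g)\<in>E} < sum s S"
        by (auto simp: not_le)
      define NS where "NS = {g\<in>{..<m}. \<exists>i\<in>S. (i,g)\<in>E}"
      define T where "T = {..<m} - NS"
      have cT: "card T = m - card NS" unfolding T_def NS_def by (subst card_Diff_subset) auto
      have "card NS \<le> card {..<m}" unfolding NS_def by (intro card_mono) auto
      then have "card NS \<le> m" by simp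
      then have "m + 1 \<le> card T + sum s S" using cT S(2) unfolding NS_def by linarith
      then have "(S,T) \<in> V" unfolding V_def T_def using S(1) by auto
      moreover have "u \<in> Bad (S,T)"
      proof -
        have "u ij < \<tau>" if ij: "ij \<in> S \<times> T" for ij
        proof -
          obtain i g where ig: "ij = (i,g)" "i \<in> S" "g \<in> T" using ij by auto
          then have "g < m" "g \<notin> NS" unfolding T_def by auto
          then have "(i,g) \<notin> E" using ig(2) unfolding NS_def by auto
          moreover have "i < n" using ig(2) S(1) by auto
          ultimately show ?thesis using \<open>g < m\<close> ig(1) unfolding E_def threshold_graph_def by auto
        qed
        then show ?thesis using u unfolding Bad_def by auto
      qed
      ultimately show "u \<in> (\<Union>ST\<in>V. Bad ST)" by blast
    qed
    have q: "measure D {..<\<tau>} \<le> 1 - p0"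
      using upper_tail[OF DP Dd fm _ _ tau1 a0] fb tau0 p0eq by auto
    have q0: "0 \<le> 1 - p0" using q measure_nonneg[of D "{..<\<tau>}"] by linarith
    have badm: "Bad ST \<in> sets P" "measure P (Bad ST) \<le> exp (- p0 * real (card (fst ST)) * real (card (snd ST)))"
      if "ST \<in> V" for ST
    proof -
      have J: "fst ST \<times> snd ST \<subseteq> I" using that unfolding V_def I_def by auto
      have finI: "finite I" unfolding I_def by simp
      note bm = bad_meas[OF DP spD sD finI J, of \<tau>]
      show "Bad ST \<in> sets P" unfolding Bad_def P_def using bm(1) by simp
      have cJ: "card (fst ST \<times> snd ST) = card (fst ST) * card (snd ST)" by (rule card_cartesian_product)
      have "measure P (Bad ST) = measure D {..<\<tau>} ^ (card (fst ST) * card (snd ST))"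
        unfolding Bad_def P_def using bm(2) cJ by simp
      also have "\<dots> \<le> (1 - p0) ^ (card (fst ST) * card (snd ST))"
        using q by (intro power_mono) auto
      also have "\<dots> \<le> exp (- p0) ^ (card (fst ST) * card (snd ST))"
        using q0 exp_ge_add_one_self[of "- p0"] by (intro power_mono) auto
      also have "\<dots> = exp (real (card (fst ST) * card (snd ST)) * (- p0))"
        by (rule exp_of_nat_mult[symmetric])
      also have "\<dots> = exp (- p0 * real (card (fst ST)) * real (card (snd ST)))"
        by (simp add: algebra_simps)
      finally show "measure P (Bad ST) \<le> exp (- p0 * real (card (fst ST)) * real (card (snd ST)))" .
    qed
    have per: "exp (- p0 * real (card (fst ST)) * real (card (snd ST))) \<le>
        1 / real m ^ 3 * (1 / real (n choose card (fst ST)) * (1 / real (m choose card (snd ST))))"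
      if "ST \<in> V" for ST
    proof -
      obtain S T where ST: "ST = (S,T)" by (cases ST)
      have S: "S \<subseteq> {..<n}" and T: "T \<subseteq> {..<m}" and big: "m + 1 \<le> card T + sum s S"
        using that unfolding V_def ST by auto
      define k where "k = card S"
      define t where "t = card T"
      have finS: "finite S" using S finite_subset by blast
      have kn: "k \<le> n" unfolding k_def using card_mono[OF _ S] by simp
      have tm: "t \<le> m" unfolding t_def using card_mono[OF _ T] by simp
      have sS: "sum s S \<le> m" using s3 sum_mono2[OF _ S, of s] by simp
      have t1: "1 \<le> t" using big sS unfolding t_def by linarith
      have k1: "1 \<le> k"
      proof (rule ccontr)
        assume "\<not> 1 \<le> k"
        then have "card S = 0" unfolding k_def by simp
        then have "S = {}" using finS by simp
        then show False using big tm unfolding t_def by simp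
      qed
      have split: "sum s {..<n} = sum s S + sum s ({..<n} - S)"
        using S by (simp add: sum.subset_diff)
      have "card ({..<n} - S) \<le> sum s ({..<n} - S)"
      proof -
        have "(\<Sum>i\<in>{..<n} - S. (1::nat)) \<le> sum s ({..<n} - S)" using s1 by (intro sum_mono) auto
        then show ?thesis by simp
      qed
      moreover have "card ({..<n} - S) = n - k" unfolding k_def using S finS by (simp add: card_Diff_subset)
      ultimately have tk: "n + 1 \<le> k + t" using split s3 big kn unfolding t_def by linarith
      have "real m - real t + 1 \<le> real (sum s S)" using big unfolding t_def by linarith
      also have "\<dots> = (\<Sum>i\<in>S. real (s i))" by simp
      also have "\<dots> \<le> (\<Sum>i\<in>S. C * real m / real n + 1)" using s2 S by (intro sum_mono) auto
      also have "\<dots> = real k * (C * real m / real n + 1)" unfolding k_def by simp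
      finally have h: "real m - real t + 1 \<le> real k * (C * real m / real n + 1)" .
      have kt: "real (n choose k) * real (m choose t) * exp (- (8*(C+1)*ln (real m) / real n) * real k * real t)
         \<le> 1 / real m ^ 3" by (rule key_term[OF C1 n3 nm k1 kn t1 tm tk h])
      have e: "exp (- (8*(C+1)*ln (real m) / real n) * real k * real t) = exp (- p0 * real k * real t)"
        unfolding p0_def by simp
      have b1: "real (n choose k) > 0" using kn by simp
      have b2: "real (m choose t) > 0" using tm by simp
      have "exp (- p0 * real k * real t) \<le> 1 / real m ^ 3 / (real (n choose k) * real (m choose t))"
      proof -
        have X: "real (n choose k) * real (m choose t) > 0" using b1 b2 by simp
        have "exp (- p0 * real k * real t) * (real (n choose k) * real (m choose t)) \<le> 1 / real m ^ 3"
          using kt unfolding e by (simp add: mult.commute mult.left_commute)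
        then show ?thesis using X by (simp only: pos_le_divide_eq)
      qed
      then show ?thesis unfolding ST k_def t_def by simp
    qed
    have total: "(\<Sum>ST\<in>V. 1 / real m ^ 3 * (1 / real (n choose card (fst ST)) * (1 / real (m choose card (snd ST))))) \<le> \<eta>"
    proof -
      define g where "g ST = 1 / real m ^ 3 * (1 / real (n choose card (fst ST)) * (1 / real (m choose card (snd ST))))" for ST :: "nat set \<times> nat set"
      have "(\<Sum>ST\<in>V. g ST) \<le> (\<Sum>ST\<in>Pow {..<n} \<times> Pow {..<m}. g ST)"
        by (intro sum_mono2) (auto simp: V_def g_def)
      also have "\<dots> = (\<Sum>S\<in>Pow {..<n}. \<Sum>T\<in>Pow {..<m}. g (S,T))"
        by (simp add: sum.cartesian_product case_prod_beta')
      also have "\<dots> = 1 / real m ^ 3 * ((\<Sum>S\<in>Pow {..<n}. 1 / real (n choose card S)) * (\<Sum>T\<in>Pow {..<m}. 1 / real (m choose card T)))"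
      proof -
        define c where "c = 1 / real m ^ 3"
        define a where "a S = 1 / real (n choose card S)" for S :: "nat set"
        define b where "b T = 1 / real (m choose card T)" for T :: "nat set"
        have i: "(\<Sum>T\<in>Pow {..<m}. c * (a S * b T)) = (c * a S) * (\<Sum>T\<in>Pow {..<m}. b T)" for S
          by (simp add: sum_distrib_left mult.assoc)
        have "(\<Sum>S\<in>Pow {..<n}. \<Sum>T\<in>Pow {..<m}. g (S,T)) = (\<Sum>S\<in>Pow {..<n}. (c * a S) * (\<Sum>T\<in>Pow {..<m}. b T))"
          unfolding g_def c_def a_def b_def using i[unfolded c_def a_def b_def] by simp
        also have "\<dots> = (\<Sum>S\<in>Pow {..<n}. c * a S) * (\<Sum>T\<in>Pow {..<m}. b T)"
          by (rule sum_distrib_right[symmetric])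
        also have "\<dots> = c * ((\<Sum>S\<in>Pow {..<n}. a S) * (\<Sum>T\<in>Pow {..<m}. b T))"
          by (simp only: sum_distrib_left[symmetric] mult.assoc)
        finally show ?thesis unfolding c_def a_def b_def .
      qed
      also have "\<dots> = 1 / real m ^ 3 * ((real n + 1) * (real m + 1))"
        using sum_inv_choose[of "{..<n}"] sum_inv_choose[of "{..<m}"] by simp
      also have "\<dots> \<le> 1 / real m ^ 3 * ((2 * real m) * (2 * real m))"
        using nm n3 by (intro mult_left_mono mult_mono) auto
      also have "\<dots> = 4 / real m" using mpos by (simp add: power3_eq_cube field_simps)
      also have "\<dots> \<le> 4 / real n" using nm npos by (intro divide_left_mono) auto
      also have "\<dots> \<le> \<eta>" by (rule heta)
      finally show ?thesis unfolding g_def .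
    qed
    have "measure P (space P - good) \<le> measure P (\<Union>ST\<in>V. Bad ST)"
      using cover badm(1) finV by (intro P.finite_measure_mono) auto
    also have "\<dots> \<le> (\<Sum>ST\<in>V. measure P (Bad ST))"
      using badm(1) finV by (intro P.finite_measure_subadditive_finite) auto
    also have "\<dots> \<le> (\<Sum>ST\<in>V. 1 / real m ^ 3 * (1 / real (n choose card (fst ST)) * (1 / real (m choose card (snd ST)))))"
      using badm(2) per by (intro sum_mono) (meson order_trans)
    also have "\<dots> \<le> \<eta>" by (rule total)
    finally have "measure P (space P - good) \<le> \<eta>" .
    moreover have "measure P good = 1 - measure P (space P - good)"
      using P.prob_compl[OF goodm] by simp
    ultimately have "measure P good \<ge> 1 - \<eta>" by simp
    then show "measure (PiM ({..<n} \<times> {..<m}) (\<lambda>_. D))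
                 {u \<in> space (PiM ({..<n} \<times> {..<m}) (\<lambda>_. D)).
                    \<exists>F. left_saturating_s_matching
                          (threshold_graph n m u (tau_param \<alpha> C n m)) {..<n} {..<m}
                          (s_param \<alpha> C \<epsilon> \<mu> n m w) F}
               \<ge> 1 - \<eta>"
      unfolding good_def P_def I_def \<tau>_def s_def .
  qed
qed

end
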